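(* For an integer $j\ge 2$ let $\bar\alpha_j$ be the largest $\alpha\ge 0$ such that $\left(1-e^{-\alpha^{j-1}x^{j-1}}\right)^{j-1}\le x$ for all $x\in(0,1]$, and for $\delta\in(0,1)$ let $\gamma_0(j,\delta)=\bar\alpha_j^{-(j-1)/j}\,j\,\delta^{-1/j}$. Then for every $\delta\in(0,e^{-1})$, choosing $j=\lceil\ln(1/\delta)\rceil$ gives $$\gamma_0(j,\delta)\le e\,\left\lceil \ln\tfrac{1}{\delta}\right\rceil .$$
   Context: $\gamma_0(j,\delta)$ is the minimum oversampling ratio (number of measurements divided by number of nonzero signal entries) for LM1 reconstruction with $(j,k)$-regular LDPC measurement matrices at sparsity fraction $\delta$. *)

theory Defs
  imports "HOL-Analysis.Analysis"
begin

definition alpha_admissible :: "nat \<Rightarrow> real \<Rightarrow> bool" where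
  "alpha_admissible j \<alpha> \<longleftrightarrow> \<alpha> \<ge> 0 \<and>
     (\<forall>x::real. 0 < x \<and> x \<le> 1 \<longrightarrow>
        (1 - exp (- (\<alpha> ^ (j - 1) * x ^ (j - 1)))) ^ (j - 1) \<le> x)"

definition alpha_bar :: "nat \<Rightarrow> real" where
  "alpha_bar j = (GREATEST \<alpha>. alpha_admissible j \<alpha>)"

definition gamma0 :: "nat \<Rightarrow> real \<Rightarrow> real" where
  "gamma0 j \<delta> = alpha_bar j powr (- (real j - 1) / real j) * real j * \<delta> powr (- 1 / real j)"

end

theory Submission
  imports Defs
begin

lemma one_adm:
  assumes "j \<ge> 2"
  shows "alpha_admissible j 1"
  unfolding alpha_admissible_def
proof (intro conjI allI impI)
  fix x :: real assume x: "0 < x \<and> x \<le> 1"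
  define m where "m = j - 1"
  have m: "m \<ge> 1" using assms m_def by auto
  have t0: "0 \<le> x ^ m" using x by simp
  have "1 - exp (- (x ^ m)) \<le> x ^ m"
    using exp_ge_add_one_self[of "- (x ^ m)"] by linarith
  moreover have "0 \<le> 1 - exp (- (x ^ m))" using t0 by simp
  ultimately have "(1 - exp (- (x ^ m))) ^ m \<le> (x ^ m) ^ m"
    by (rule power_mono)
  also have "(x ^ m) ^ m \<le> (x ^ m) ^ 1"
    by (rule power_decreasing) (use m x in \<open>auto intro: power_le_one\<close>)
  also have "\<dots> = x ^ m" by simp
  also have "x ^ m \<le> x ^ 1"
    by (rule power_decreasing) (use m x in auto)
  finally show "(1 - exp (- (1 ^ (j - 1) * x ^ (j - 1)))) ^ (j - 1) \<le> x"
    by (simp add: m_def)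
qed simp

lemma adm_bounded:
  assumes "j \<ge> 2" "alpha_admissible j a"
  shows "a \<le> 2 + 2 * ln (2 * real (j - 1))"
proof (rule ccontr)
  define m where "m = j - 1"
  have m: "m \<ge> 1" using assms m_def by auto
  assume "\<not> ?thesis"
  hence big: "a / 2 > 1 + ln (2 * real m)" unfolding m_def by linarith
  have lnpos: "ln (2 * real m) \<ge> 0" using m by simp
  have a2: "a / 2 > 1" using big lnpos by linarith
  define t where "t = (a / 2) ^ m"
  have p: "(a/2)^1 \<le> (a/2)^m"
    by (rule power_increasing) (use m a2 in auto)
  have "a / 2 \<le> t" unfolding t_def using p by simp
  hence tbig: "t > ln (2 * real m)" using big by linarith
  have mpos: "0 < 2 * real m" using m by simp
  have "exp (- t) < exp (- ln (2 * real m))" using tbig by simp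
  also have "exp (- ln (2 * real m)) = inverse (2 * real m)"
    using mpos by (simp add: exp_minus)
  finally have e0: "exp (- t) < inverse (2 * real m)" .
  have "real m * exp (- t) < real m * inverse (2 * real m)"
    using e0 m by (intro mult_strict_left_mono) auto
  also have "real m * inverse (2 * real m) = 1/2" using m by simp
  finally have e: "real m * exp (- t) < 1/2" .
  have "1 + real m * (- exp (- t)) \<le> (1 + (- exp (- t))) ^ m"
  proof (rule Bernoulli_inequality)
    have "t \<ge> 0" unfolding t_def using a2 by simp
    thus "- 1 \<le> - exp (- t)" by simp
  qed
  hence "(1 - exp (- t)) ^ m > 1/2" using e by simp
  moreover have "(1 - exp (- t)) ^ m \<le> 1/2"
  proof -
    have H: "\<forall>x::real. 0 < x \<and> x \<le> 1 \<longrightarrow> (1 - exp (- (a ^ m * x ^ m))) ^ m \<le> x"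
      using assms(2) unfolding alpha_admissible_def m_def by blast
    have "(0::real) < 1/2 \<and> 1/2 \<le> (1::real)" by simp
    with H have "(1 - exp (- (a ^ m * (1/2) ^ m))) ^ m \<le> 1/2" by blast
    moreover have "a ^ m * (1/2) ^ m = t" unfolding t_def by (simp add: power_divide)
    ultimately show ?thesis by simp
  qed
  ultimately show False by simp
qed

lemma alpha_bar_ge1:
  assumes j: "j \<ge> 2"
  shows "alpha_bar j \<ge> 1"
proof -
  define m where "m = j - 1"
  define S where "S = {\<alpha>. alpha_admissible j \<alpha>}"
  have S_eq: "S = {\<alpha>. 0 \<le> \<alpha>} \<inter>
     (\<Inter>x\<in>{0<..1::real}. {\<alpha>. (1 - exp (- (\<alpha> ^ m * x ^ m))) ^ m \<le> x})"
    unfolding S_def alpha_admissible_def m_def by auto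
  have cl: "closed S" unfolding S_eq
  proof (intro closed_Int closed_INT ballI)
    show "closed {\<alpha>::real. 0 \<le> \<alpha>}"
      using closed_Collect_le[of "\<lambda>_. 0::real" "\<lambda>\<alpha>. \<alpha>"] by simp
    fix x :: real
    show "closed {\<alpha>. (1 - exp (- (\<alpha> ^ m * x ^ m))) ^ m \<le> x}"
      by (rule closed_Collect_le) (intro continuous_intros)+
  qed
  have one: "1 \<in> S" using one_adm[OF j] S_def by simp
  have bdd: "bdd_above S" unfolding S_def
    by (rule bdd_aboveI[where M="2 + 2 * ln (2 * real (j - 1))"]) (use adm_bounded[OF j] in auto)
  have sup: "Sup S \<in> S" using closed_contains_Sup[of S] one bdd cl by auto
  have "alpha_bar j = Sup S" unfolding alpha_bar_def
  proof (rule Greatest_equality)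
    show "alpha_admissible j (Sup S)" using sup S_def by simp
    fix y assume "alpha_admissible j y"
    hence "y \<in> S" using S_def by simp
    thus "y \<le> Sup S" using bdd by (rule cSup_upper)
  qed
  moreover have "1 \<le> Sup S" using one bdd by (rule cSup_upper)
  ultimately show ?thesis by simp
qed

theorem corollary2:
  fixes \<delta> :: real
  assumes "0 < \<delta>" and "\<delta> < exp (- 1)"
  shows "gamma0 (nat \<lceil>ln (1 / \<delta>)\<rceil>) \<delta> \<le> exp 1 * real_of_int \<lceil>ln (1 / \<delta>)\<rceil>"
proof -
  define L where "L = ln (1 / \<delta>)"
  define j where "j = nat \<lceil>L\<rceil>"
  have "ln \<delta> < ln (exp (-1))" using assms by (subst ln_less_cancel_iff) auto
  hence L1: "L > 1" unfolding L_def using assms by (simp add: ln_div)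
  have jL: "real j = real_of_int \<lceil>L\<rceil>" unfolding j_def using L1 by simp
  have Lj: "L \<le> real j" using jL by linarith
  have j2: "j \<ge> 2" using L1 jL by linarith
  have jpos: "real j > 0" using j2 by simp
  have A: "alpha_bar j powr (- (real j - 1) / real j) \<le> 1"
  proof -
    have a1: "alpha_bar j \<ge> 1" using alpha_bar_ge1[OF j2] .
    have "alpha_bar j powr (- (real j - 1) / real j) = exp ((- (real j - 1) / real j) * ln (alpha_bar j))"
      using a1 by (simp add: powr_def)
    also have "\<dots> \<le> exp 0"
    proof (subst exp_le_cancel_iff)
      have "0 \<le> ln (alpha_bar j)" using a1 by simp
      moreover have "(- (real j - 1) / real j) \<le> 0" using jpos j2 by (simp add: divide_nonpos_pos)
      ultimately show "(- (real j - 1) / real j) * ln (alpha_bar j) \<le> 0"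
        by (rule mult_nonpos_nonneg[rotated])
    qed
    finally show ?thesis by simp
  qed
  have D: "\<delta> powr (- 1 / real j) \<le> exp 1"
  proof -
    have "\<delta> powr (- 1 / real j) = exp (L / real j)"
      using assms(1) unfolding L_def by (simp add: powr_def ln_div)
    also have "\<dots> \<le> exp 1" using Lj jpos by (simp add: divide_le_eq_1)
    finally show ?thesis .
  qed
  have "gamma0 j \<delta> \<le> 1 * real j * exp 1"
    unfolding gamma0_def
    by (intro mult_mono A D) (use jpos in auto)
  thus ?thesis using jL unfolding j_def L_def by (simp add: mult.commute)
qed

end
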